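(* Let $f\colon M\to\mathbb H$ be a minimal conformal immersion with right normal $R$, and let $d^S_\lambda$ be the associated family of connections of its conformal Gauss map. For $\mu\in\mathbb C\setminus\{0,1\}$, a section $\varphi\colon\tilde M\to\mathbb H^2$ is $d^S_\mu$-parallel if and only if either $\varphi=en$ for a constant $n\in\mathbb H$, or $\varphi=e\alpha+\psi\beta$ with $$\alpha=-f^*m-fm\,\frac{i(1+\mu)}{1-\mu},\qquad \beta=Rm+m\,\frac{i(1+\mu)}{1-\mu}$$ for some $m\in\mathbb H_*$ and some conjugate surface $f^*$ of $f$.
   Context: Quaternions $\mathbb H$, $\mathbb H_*=\mathbb H\setminus\{0\}$, $\mathbb C=\operatorname{span}_{\mathbb R}\{1,i\}\subset\mathbb H$. $M$ Riemann surface, $\tilde M$ its universal cover, $*\omega(X)=\omega(JX)$. Normals: $*df=N\,df=-df\,R$. A conjugate surface $f^*\colon\tilde M\to\mathbb H$ satisfies $df^*=-*df$. On $\tilde M\times\mathbb H^2$ (quaternionic right module, complex structure $I$ = right multiplication by $i$) let $e=(1,0)^t$, $\psi=(f,1)^t$, $G=\begin{pmatrix}1&f\\0&1\end{pmatrix}$. For minimal $f$ the Hopf field $A$ of the conformal Gauss map is the $\operatorname{End}(\mathbb H^2)$-valued 1-form with $2*A=G\begin{pmatrix}0&0\\0&dR\end{pmatrix}G^{-1}$. Put $A^{(1,0)}\varphi=\tfrac12(A\varphi-( *A\varphi)i)$, $A^{(0,1)}\varphi=\tfrac12(A\varphi+( *A\varphi)i)$ and $d^S_\lambda=d+(\lambda-1)A^{(1,0)}+(\lambda^{-1}-1)A^{(0,1)}$,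 $\lambda\in\mathbb C_*$. *)

theory Defs
  imports "HOL-Analysis.Analysis"
begin

text \<open>Quaternions via Cayley-Dickson: (a,b) represents a + b j with a,b complex,
  so that a + b j = a0 + a1 i + (b0 + b1 i) j.  The norm and inner product of the
  product type complex \<times> complex are the Euclidean ones of R^4.\<close>

type_synonym quat = "complex \<times> complex"

definition qmul :: "quat \<Rightarrow> quat \<Rightarrow> quat" where
  "qmul p q = (fst p * fst q - snd p * cnj (snd q), fst p * snd q + snd p * cnj (fst q))"

definition qc :: "complex \<Rightarrow> quat" where
  "qc z = (z, 0)"

definition qi :: quat where
  "qi = qc \<i>"

definition rmul2 :: "quat \<times> quat \<Rightarrow> quat \<Rightarrow> quat \<times> quat" where
  "rmul2 w q = (qmul (fst w) q, qmul (snd w) q)"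

text \<open>Differential: dF_z(X), with tangent vectors X in C (complex structure J X = i X).\<close>
definition D :: "(complex \<Rightarrow> 'a::real_normed_vector) \<Rightarrow> complex \<Rightarrow> complex \<Rightarrow> 'a" where
  "D F z = frechet_derivative F (at z)"

fun Ck_on :: "nat \<Rightarrow> (complex \<Rightarrow> 'a::real_normed_vector) \<Rightarrow> complex set \<Rightarrow> bool" where
  "Ck_on 0 F U = continuous_on U F"
| "Ck_on (Suc k) F U = ((\<forall>z\<in>U. F differentiable (at z)) \<and> (\<forall>v. Ck_on k (\<lambda>z. D F z v) U))"

definition smooth_on :: "(complex \<Rightarrow> 'a::real_normed_vector) \<Rightarrow> complex set \<Rightarrow> bool" where
  "smooth_on F U = (\<forall>k. Ck_on k F U)"

definition conformal_immersion :: "(complex \<Rightarrow> quat) \<Rightarrow> complex set \<Rightarrow> bool" where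
  "conformal_immersion f U =
     (smooth_on f U \<and>
      (\<forall>z\<in>U. D f z 1 \<noteq> 0 \<and> norm (D f z 1) = norm (D f z \<i>) \<and> inner (D f z 1) (D f z \<i>) = 0))"

text \<open>Minimal (for a conformal immersion): harmonic, i.e. d*df = 0.\<close>
definition minimal_on :: "(complex \<Rightarrow> quat) \<Rightarrow> complex set \<Rightarrow> bool" where
  "minimal_on f U = (\<forall>z\<in>U. D (\<lambda>w. D f w 1) z 1 + D (\<lambda>w. D f w \<i>) z \<i> = 0)"

definition right_normal :: "(complex \<Rightarrow> quat) \<Rightarrow> (complex \<Rightarrow> quat) \<Rightarrow> complex set \<Rightarrow> bool" where
  "right_normal f R U = (\<forall>z\<in>U. \<forall>X. D f z (\<i> * X) = - qmul (D f z X) (R z))"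

definition conjugate_surface :: "(complex \<Rightarrow> quat) \<Rightarrow> (complex \<Rightarrow> quat) \<Rightarrow> complex set \<Rightarrow> bool" where
  "conjugate_surface f fs U =
     ((\<forall>z\<in>U. fs differentiable (at z)) \<and> (\<forall>z\<in>U. \<forall>X. D fs z X = - D f z (\<i> * X)))"

text \<open>*A at z applied to X and v = (v1,v2):  (1/2) G diag(0,dR(X)) G^{-1} v
  = (1/2) (f dR(X) v2, dR(X) v2).\<close>
definition starA :: "(complex \<Rightarrow> quat) \<Rightarrow> (complex \<Rightarrow> quat) \<Rightarrow> complex \<Rightarrow> complex \<Rightarrow> quat \<times> quat \<Rightarrow> quat \<times> quat" where
  "starA f R z X v = (1/2) *\<^sub>R (qmul (qmul (f z) (D R z X)) (snd v), qmul (D R z X) (snd v))"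

text \<open>A(X) = - (*A)(JX), since ** = -1.\<close>
definition hopfA :: "(complex \<Rightarrow> quat) \<Rightarrow> (complex \<Rightarrow> quat) \<Rightarrow> complex \<Rightarrow> complex \<Rightarrow> quat \<times> quat \<Rightarrow> quat \<times> quat" where
  "hopfA f R z X v = - starA f R z (\<i> * X) v"

definition A10 :: "(complex \<Rightarrow> quat) \<Rightarrow> (complex \<Rightarrow> quat) \<Rightarrow> complex \<Rightarrow> complex \<Rightarrow> quat \<times> quat \<Rightarrow> quat \<times> quat" where
  "A10 f R z X v = (1/2) *\<^sub>R (hopfA f R z X v - rmul2 (hopfA f R z (\<i> * X) v) qi)"

definition A01 :: "(complex \<Rightarrow> quat) \<Rightarrow> (complex \<Rightarrow> quat) \<Rightarrow> complex \<Rightarrow> complex \<Rightarrow> quat \<times> quat \<Rightarrow> quat \<times> quat" where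
  "A01 f R z X v = (1/2) *\<^sub>R (hopfA f R z X v + rmul2 (hopfA f R z (\<i> * X) v) qi)"

text \<open>d^S_lambda phi (X) at z; complex scalars act via the complex structure I (right mult.).\<close>
definition dS :: "(complex \<Rightarrow> quat) \<Rightarrow> (complex \<Rightarrow> quat) \<Rightarrow> complex \<Rightarrow> (complex \<Rightarrow> quat \<times> quat) \<Rightarrow> complex \<Rightarrow> complex \<Rightarrow> quat \<times> quat" where
  "dS f R lam \<phi> z X =
     D \<phi> z X + rmul2 (A10 f R z X (\<phi> z)) (qc (lam - 1))
              + rmul2 (A01 f R z X (\<phi> z)) (qc (inverse lam - 1))"

definition dS_parallel :: "(complex \<Rightarrow> quat) \<Rightarrow> (complex \<Rightarrow> quat) \<Rightarrow> complex \<Rightarrow> (complex \<Rightarrow> quat \<times> quat) \<Rightarrow> complex set \<Rightarrow> bool" where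
  "dS_parallel f R lam \<phi> U = ((\<forall>z\<in>U. \<phi> differentiable (at z)) \<and> (\<forall>z\<in>U. \<forall>X. dS f R lam \<phi> z X = 0))"

end

theory Submission
  imports Defs "HOL-Complex_Analysis.Complex_Analysis"
begin

lemma qmul_assoc: "qmul (qmul a b) c = qmul a (qmul b c)"
  by (simp add: qmul_def algebra_simps)

lemma qmul_add_left: "qmul (a + b) c = qmul a c + qmul b c"
  and qmul_add_right: "qmul a (b + c) = qmul a b + qmul a c"
  and qmul_diff_left: "qmul (a - b) c = qmul a c - qmul b c"
  and qmul_diff_right: "qmul a (b - c) = qmul a b - qmul a c"
  and qmul_minus_left: "qmul (- a) c = - qmul a c"
  and qmul_minus_right: "qmul a (- c) = - qmul a c"
  and qmul_scaleR_left: "qmul (r *\<^sub>R a) c = r *\<^sub>R qmul a c"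
  and qmul_scaleR_right: "qmul a (r *\<^sub>R c) = r *\<^sub>R qmul a c"
  and qmul_zero_left: "qmul 0 c = 0"
  and qmul_zero_right: "qmul a 0 = 0"
  by (simp_all add: qmul_def algebra_simps scaleR_conv_of_real zero_prod_def)

lemma qc_mult: "qmul (qc a) (qc b) = qc (a * b)"
  and qc_add: "qc a + qc b = qc (a + b)"
  and qc_diff: "qc a - qc b = qc (a - b)"
  and qc_minus: "- qc a = qc (- a)"
  and qc_zero: "qc 0 = 0"
  and qc_one_left: "qmul (qc 1) x = x"
  and qc_one_right: "qmul x (qc 1) = x"
  and qc_scaleR: "r *\<^sub>R qc a = qc (of_real r * a)"
  by (simp_all add: qc_def qmul_def scaleR_conv_of_real zero_prod_def)

lemma bilinear_qmul: "bilinear qmul"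
  unfolding bilinear_def linear_iff
  by (simp add: qmul_add_left qmul_add_right qmul_scaleR_left qmul_scaleR_right)

lemma bounded_bilinear_qmul: "bounded_bilinear qmul"
  using bilinear_qmul bilinear_conv_bounded_bilinear by blast

lemma inv_aux: "(X::complex) \<noteq> 0 \<Longrightarrow> a*c + b*d = X \<Longrightarrow> a * (inverse X * c) + b * (inverse X * d) = 1"
proof -
  assume "X \<noteq> 0" "a*c + b*d = X"
  have "a * (inverse X * c) + b * (inverse X * d) = inverse X * (a*c + b*d)" by (simp add: algebra_simps)
  thus ?thesis using \<open>X \<noteq> 0\<close> \<open>a*c + b*d = X\<close> by simp
qed

lemma inv_aux2: "(X::complex) \<noteq> 0 \<Longrightarrow> a*c + b*d = X \<Longrightarrow> inverse X * c * a + inverse X * b * d = 1"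
  using inv_aux[of X a c b d] by (simp add: algebra_simps)

definition qinv :: "quat \<Rightarrow> quat" where
  "qinv q = inverse (inner q q) *\<^sub>R (cnj (fst q), - snd q)"

lemma inner_quat: "inner q q = (cmod (fst q))\<^sup>2 + (cmod (snd q))\<^sup>2"
  by (cases q) (simp add: inner_Pair power2_norm_eq_inner)

lemma qinv_right: "q \<noteq> 0 \<Longrightarrow> qmul q (qinv q) = qc 1"
  and qinv_left: "q \<noteq> 0 \<Longrightarrow> qmul (qinv q) q = qc 1"
proof -
  assume "q \<noteq> 0"
  obtain a b where q: "q = (a,b)" by (cases q)
  have n: "(cmod a)\<^sup>2 + (cmod b)\<^sup>2 \<noteq> 0" using \<open>q \<noteq> 0\<close> q
    by (metis add_nonneg_eq_0_iff norm_eq_zero prod.inject zero_le_power2 zero_prod_def power_zero_numeral zero_eq_power2)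
  have e1: "a * cnj a + b * cnj b = complex_of_real ((cmod a)\<^sup>2 + (cmod b)\<^sup>2)"
    by (simp add: complex_norm_square del: of_real_power)
  have e2: "cnj a * a + b * cnj b = complex_of_real ((cmod a)\<^sup>2 + (cmod b)\<^sup>2)"
    by (simp add: complex_norm_square mult.commute del: of_real_power)
  have n2: "(complex_of_real (cmod a))\<^sup>2 + (complex_of_real (cmod b))\<^sup>2 \<noteq> 0"
    using n by (metis of_real_add of_real_eq_0_iff of_real_power)
  have e3: "a * cnj a + b * cnj b = (complex_of_real (cmod a))\<^sup>2 + (complex_of_real (cmod b))\<^sup>2"
    using e1 by simp
  show "qmul q (qinv q) = qc 1" using n2 e3
    by (simp add: q qinv_def qmul_def qc_def inner_quat scaleR_conv_of_real)
       (rule inv_aux[OF n2 e3])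
  show "qmul (qinv q) q = qc 1" using n2 e3
    by (simp add: q qinv_def qmul_def qc_def inner_quat scaleR_conv_of_real)
       (rule inv_aux2[OF n2 e3])
qed

definition Ecomb :: "quat \<Rightarrow> quat \<Rightarrow> complex \<Rightarrow> complex \<Rightarrow> quat" where
  "Ecomb R m x y = qmul R (qmul m (qc x)) + qmul m (qc y)"

lemma E_add: "Ecomb R m x y + Ecomb R m x' y' = Ecomb R m (x+x') (y+y')"
  and E_diff: "Ecomb R m x y - Ecomb R m x' y' = Ecomb R m (x-x') (y-y')"
  and E_minus: "- Ecomb R m x y = Ecomb R m (-x) (-y)"
  and E_scaleR: "r *\<^sub>R Ecomb R m x y = Ecomb R m (of_real r * x) (of_real r * y)"
  and E_mulc: "qmul (Ecomb R m x y) (qc w) = Ecomb R m (x*w) (y*w)"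
  and E_zero: "0 = Ecomb R m 0 0"
  by (simp_all add: Ecomb_def qmul_add_left qmul_add_right qmul_diff_left qmul_diff_right
      qmul_minus_left qmul_minus_right qmul_scaleR_right qmul_assoc qc_mult
      flip: qc_add qc_diff qc_minus qc_scaleR) (simp_all add: qc_zero qmul_zero_right algebra_simps)

lemma E_R: "qmul R R = - qc 1 \<Longrightarrow> qmul R (Ecomb R m x y) = Ecomb R m y (-x)"
proof -
  assume RR: "qmul R R = - qc 1"
  have "qmul R (qmul R w) = - w" for w
    by (simp add: RR qmul_assoc[symmetric] qmul_minus_left qc_one_left)
  thus ?thesis by (simp add: Ecomb_def qmul_add_right qmul_minus_right qmul_minus_left
     flip: qc_minus)
qed

lemma E_base: "m = Ecomb R m 0 1" and E_baseR: "qmul R m = Ecomb R m 1 0"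
  by (simp_all add: Ecomb_def qc_one_right qc_zero qmul_zero_right)

lemma E_cong: "x = x' \<Longrightarrow> y = y' \<Longrightarrow> Ecomb R m x y = Ecomb R m x' y'" by simp

lemma qmul_fold: "qmul P u + qmul P w = qmul P (u + w)"
  "qmul P u - qmul P w = qmul P (u - w)"
  "- qmul P u = qmul P (- u)"
  "r *\<^sub>R qmul P u = qmul P (r *\<^sub>R u)"
  by (simp_all add: qmul_add_right qmul_diff_right qmul_minus_right qmul_scaleR_right)

lemma E_is_base: "a = 0 \<Longrightarrow> b = 1 \<Longrightarrow> Ecomb R m a b = m"
  by (simp add: Ecomb_def qc_zero qmul_zero_right qc_one_right)

lemma E_sc: "qmul s (qc c) = Ecomb R s 0 c"
  by (simp add: Ecomb_def qc_zero qmul_zero_right)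

definition mform :: "quat \<Rightarrow> complex \<Rightarrow> complex \<Rightarrow> quat \<Rightarrow> quat" where
  "mform R c k s = - qmul (qmul R s - qmul s (qc c)) (qc k)"

lemma mform_right:
  assumes RR: "qmul R R = - qc 1" and k: "(1 + c*c) * k = 1"
  shows "qmul R (mform R c k s) + qmul (mform R c k s) (qc c) = s"
proof -
  have e: "mform R c k s = Ecomb R s (-k) (c*k)"
    unfolding mform_def E_sc[of s c R] E_baseR[of R s]
    by (simp only: E_diff E_minus E_mulc) (rule E_cong; simp add: algebra_simps)
  show ?thesis unfolding e
    by (simp only: E_R[OF RR] E_mulc E_add) (rule E_is_base; use k in \<open>simp add: algebra_simps\<close>)
qed

lemma mform_left:
  assumes RR: "qmul R R = - qc 1" and k: "(1 + c*c) * k = 1"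
  shows "mform R c k (qmul R x + qmul x (qc c)) = x"
proof -
  have e: "qmul R x + qmul x (qc c) = Ecomb R x 1 c"
    unfolding E_sc[of x c R] E_baseR[of R x] by (simp only: E_add) (rule E_cong; simp)
  show ?thesis unfolding e mform_def
    by (simp only: E_R[OF RR] E_mulc E_diff E_minus) (rule E_is_base; use k in \<open>simp add: algebra_simps\<close>)
qed

definition Apart where
  "Apart f R z lam X v = rmul2 (A10 f R z X v) (qc (lam - 1)) + rmul2 (A01 f R z X v) (qc (inverse lam - 1))"

lemma dS_Apart: "dS f R lam \<phi> z X = D \<phi> z X + Apart f R z lam X (\<phi> z)"
  by (simp add: dS_def Apart_def add.assoc)

lemma Apart_fst: "fst (Apart f R z lam X v) = qmul (f z) (snd (Apart f R z lam X v))"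
  by (simp add: Apart_def A10_def A01_def hopfA_def starA_def rmul2_def qmul_assoc
      qmul_add_left qmul_add_right qmul_diff_left qmul_diff_right qmul_minus_left qmul_minus_right
      qmul_scaleR_left qmul_scaleR_right)

lemma Apart_zero: "snd v = 0 \<Longrightarrow> Apart f R z lam X v = 0"
  by (simp add: Apart_def A10_def A01_def hopfA_def starA_def rmul2_def qmul_zero_right qmul_zero_left)
     (simp add: zero_prod_def)

lemma Apart_snd: "snd (Apart f R z lam X v) =
   qmul ((1/2) *\<^sub>R (- ((1/2) *\<^sub>R qmul (D R z (\<i>*X)) (snd v)) + (1/2) *\<^sub>R qmul (qmul (D R z (-X)) (snd v)) (qc \<i>))) (qc (lam - 1))
 + qmul ((1/2) *\<^sub>R (- ((1/2) *\<^sub>R qmul (D R z (\<i>*X)) (snd v)) - (1/2) *\<^sub>R qmul (qmul (D R z (-X)) (snd v)) (qc \<i>))) (qc (inverse lam - 1))"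
  by (simp add: Apart_def A10_def A01_def hopfA_def starA_def rmul2_def qi_def qmul_minus_left qmul_scaleR_left algebra_simps)

lemma Apart_1:
  assumes RR: "qmul R0 R0 = - qc 1" and lam: "lam \<noteq> 0" "lam \<noteq> 1"
    and c: "c = \<i> * (1 + lam) / (1 - lam)"
    and d1: "D R z \<i> = qmul P R0" and d2: "D R z (-1) = - P"
    and v: "snd v = Ecomb R0 m 1 c"
  shows "snd (Apart f R z lam 1 v) = - qmul P m"
proof -
  have l1: "1 - lam \<noteq> 0" using lam by simp
  have "snd (Apart f R z lam 1 v) = qmul P (Ecomb R0 m 0 (-1))"
    unfolding Apart_snd v
    apply (simp add: d1 d2 qmul_assoc qmul_minus_left qmul_scaleR_left E_R[OF RR] E_mulc qmul_fold
       E_add E_diff E_minus E_scaleR)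
    apply (rule arg_cong[where f="qmul P"], rule E_cong)
    using lam l1 unfolding c 
    apply (simp_all add: field_simps)
    done
  also have "\<dots> = - qmul P m"
  proof -
    have "Ecomb R0 m 0 (-1) = - m"
      by (simp add: Ecomb_def qc_zero qmul_zero_right qmul_minus_right qc_one_right flip: qc_minus)
    thus ?thesis by (simp add: qmul_minus_right)
  qed
  finally show ?thesis .
qed

lemma Apart_i:
  assumes RR: "qmul R0 R0 = - qc 1" and lam: "lam \<noteq> 0" "lam \<noteq> 1"
    and c: "c = \<i> * (1 + lam) / (1 - lam)"
    and d1: "D R z (-\<i>) = - qmul P R0" and d2: "D R z (-1) = - P"
    and v: "snd v = Ecomb R0 m 1 c"
  shows "snd (Apart f R z lam \<i> v) = - qmul (qmul P R0) m"
proof -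
  have l1: "1 - lam \<noteq> 0" using lam by simp
  have "snd (Apart f R z lam \<i> v) = qmul P (Ecomb R0 m (-1) 0)"
    unfolding Apart_snd v
    apply (simp add: d1 d2 qmul_assoc qmul_minus_left qmul_scaleR_left E_R[OF RR] E_mulc qmul_fold
       E_add E_diff E_minus E_scaleR)
    apply (rule arg_cong[where f="qmul P"], rule E_cong)
    using lam l1 unfolding c 
    apply (simp_all add: field_simps)
    done
  also have "\<dots> = - qmul (qmul P R0) m"
  proof -
    have "Ecomb R0 m (-1) 0 = - qmul R0 m"
      by (simp add: Ecomb_def qc_zero qmul_zero_right qmul_minus_right qc_one_right flip: qc_minus)
    thus ?thesis by (simp add: qmul_minus_right qmul_assoc)
  qed
  finally show ?thesis .
qed

lemma D_works: "F differentiable (at z) \<Longrightarrow> (F has_derivative D F z) (at z)"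
  unfolding D_def using frechet_derivative_works by blast

lemma D_unique: "(F has_derivative F') (at z) \<Longrightarrow> D F z = F'"
  unfolding D_def using frechet_derivative_at by metis

lemma D_scale: "F differentiable (at z) \<Longrightarrow> D F z (r *\<^sub>R X) = r *\<^sub>R D F z X"
  using D_works has_derivative_linear linear_scale by blast

lemma D_add: "F differentiable (at z) \<Longrightarrow> D F z (X + Y) = D F z X + D F z Y"
  using D_works has_derivative_linear linear_add by blast

lemma D_lin: "F differentiable (at z) \<Longrightarrow> D F z X = Re X *\<^sub>R D F z 1 + Im X *\<^sub>R D F z \<i>"
proof -
  assume d: "F differentiable (at z)"
  have "X = Re X *\<^sub>R 1 + Im X *\<^sub>R \<i>" by (simp add: complex_eq_iff)
  hence "D F z X = D F z (Re X *\<^sub>R 1 + Im X *\<^sub>R \<i>)" by simp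
  also have "\<dots> = Re X *\<^sub>R D F z 1 + Im X *\<^sub>R D F z \<i>" using D_add[OF d] D_scale[OF d] by simp
  finally show ?thesis .
qed

lemma D_local:
  assumes "open U" "z \<in> U" "\<And>w. w \<in> U \<Longrightarrow> F w = G w" "G differentiable (at z)"
  shows "F differentiable (at z)" "D F z = D G z"
proof -
  have "(F has_derivative D G z) (at z)"
    using has_derivative_transform_within_open[OF D_works[OF assms(4)] assms(1,2)] assms(3) by metis
  thus "F differentiable (at z)" "D F z = D G z" using differentiableI D_unique by blast+
qed

lemma schwarz_bound:
  fixes F :: "complex \<Rightarrow> 'a::real_inner"
  assumes dF: "\<And>x y. x \<in> {0..t} \<Longrightarrow> y \<in> {0..t} \<Longrightarrow> F differentiable (at (z + of_real x * u + of_real y * v))"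
    and dFu: "\<And>x y. x \<in> {0..t} \<Longrightarrow> y \<in> {0..t} \<Longrightarrow> (\<lambda>w. D F w u) differentiable (at (z + of_real x * u + of_real y * v))"
    and G: "\<And>x y. x \<in> {0..t} \<Longrightarrow> y \<in> {0..t} \<Longrightarrow> norm (D (\<lambda>w. D F w u) (z + of_real x * u + of_real y * v) v - L) \<le> e"
    and t: "t > 0"
  shows "norm (F (z + of_real t * u + of_real t * v) - F (z + of_real t * u) - F (z + of_real t * v) + F z - (t*t) *\<^sub>R L) \<le> e * (t * t)"
proof -
  define Fu where "Fu = (\<lambda>w. D F w u)"
  define h where "h x = F (z + of_real x * u + of_real t * v) - F (z + of_real x * u + of_real 0 * v) - (x*t) *\<^sub>R L" for x
  have lin: "((\<lambda>x::real. z + of_real x * u + c) has_derivative (\<lambda>dx. of_real dx * u)) (at x)" for x c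
    by (auto intro!: derivative_eq_intros)
  have chain: "((\<lambda>x::real. H (z + of_real x * u + c)) has_derivative (\<lambda>dx. dx *\<^sub>R D H (z + of_real x * u + c) u)) (at x)"
    if "H differentiable (at (z + of_real x * u + c))" for H :: "complex \<Rightarrow> 'a" and x c
  proof -
    have "((\<lambda>x::real. H (z + of_real x * u + c)) has_derivative (\<lambda>dx. D H (z + of_real x * u + c) (of_real dx * u))) (at x)"
      using has_derivative_compose[OF lin D_works[OF that]] by (simp add: o_def)
    moreover have "D H (z + of_real x * u + c) (of_real dx * u) = dx *\<^sub>R D H (z + of_real x * u + c) u" for dx
      using D_scale[OF that, of dx u] by (simp add: scaleR_conv_of_real)
    ultimately show ?thesis by simp
  qed
  have hder: "(h has_derivative (\<lambda>dx. dx *\<^sub>R (Fu (z + of_real x * u + of_real t * v) - Fu (z + of_real x * u + of_real 0 * v) - t *\<^sub>R L))) (at x)"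
    if "x \<in> {0..t}" for x
  proof -
    have c1: "((\<lambda>x::real. F (z + of_real x * u + of_real t * v)) has_derivative (\<lambda>dx. dx *\<^sub>R Fu (z + of_real x * u + of_real t * v))) (at x)"
      unfolding Fu_def by (rule chain) (use dF that t in auto)
    have c2: "((\<lambda>x::real. F (z + of_real x * u + of_real 0 * v)) has_derivative (\<lambda>dx. dx *\<^sub>R Fu (z + of_real x * u + of_real 0 * v))) (at x)"
      unfolding Fu_def by (rule chain) (use dF[of x 0] that t in auto)
    have c3: "((\<lambda>x::real. (x*t) *\<^sub>R L) has_derivative (\<lambda>dx. (dx*t) *\<^sub>R L)) (at x)"
      by (auto intro!: derivative_eq_intros)
    show ?thesis unfolding h_def
      by (rule has_derivative_eq_rhs[OF has_derivative_diff[OF has_derivative_diff[OF c1 c2] c3]])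
         (auto simp: algebra_simps)
  qed
  have hcont: "continuous_on {0..t} h"
    using hder by (meson continuous_at_imp_continuous_on has_derivative_continuous)
  obtain xi where xi: "xi \<in> {0<..<t}" and
    hb: "norm (h t - h 0) \<le> norm (t *\<^sub>R (Fu (z + of_real xi * u + of_real t * v) - Fu (z + of_real xi * u + of_real 0 * v) - t *\<^sub>R L))"
    using mvt_general[OF t hcont, of "\<lambda>x dx. dx *\<^sub>R (Fu (z + of_real x * u + of_real t * v) - Fu (z + of_real x * u + of_real 0 * v) - t *\<^sub>R L)"]
      hder by auto
  define g where "g y = Fu (z + of_real xi * u + of_real y * v) - y *\<^sub>R L" for y
  have chain2: "((\<lambda>y::real. H (z + of_real xi * u + of_real y * v)) has_derivative (\<lambda>dy. dy *\<^sub>R D H (z + of_real xi * u + of_real y * v) v)) (at y)"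
    if "H differentiable (at (z + of_real xi * u + of_real y * v))" for H :: "complex \<Rightarrow> 'a" and y
  proof -
    have lin2: "((\<lambda>y::real. z + of_real xi * u + of_real y * v) has_derivative (\<lambda>dy. of_real dy * v)) (at y)"
      by (auto intro!: derivative_eq_intros)
    have "((\<lambda>y::real. H (z + of_real xi * u + of_real y * v)) has_derivative (\<lambda>dy. D H (z + of_real xi * u + of_real y * v) (of_real dy * v))) (at y)"
      using has_derivative_compose[OF lin2 D_works[OF that]] by (simp add: o_def)
    moreover have "D H (z + of_real xi * u + of_real y * v) (of_real dy * v) = dy *\<^sub>R D H (z + of_real xi * u + of_real y * v) v" for dy
      using D_scale[OF that, of dy v] by (simp add: scaleR_conv_of_real)
    ultimately show ?thesis by simp
  qed
  have gder: "(g has_derivative (\<lambda>dy. dy *\<^sub>R (D Fu (z + of_real xi * u + of_real y * v) v - L))) (at y)"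
    if "y \<in> {0..t}" for y
  proof -
    have c1: "((\<lambda>y::real. Fu (z + of_real xi * u + of_real y * v)) has_derivative (\<lambda>dy. dy *\<^sub>R D Fu (z + of_real xi * u + of_real y * v) v)) (at y)"
      by (rule chain2) (use dFu that xi in \<open>auto simp: Fu_def\<close>)
    have c3: "((\<lambda>y::real. y *\<^sub>R L) has_derivative (\<lambda>dy. dy *\<^sub>R L)) (at y)"
      by (auto intro!: derivative_eq_intros)
    show ?thesis unfolding g_def
      by (rule has_derivative_eq_rhs[OF has_derivative_diff[OF c1 c3]]) (auto simp: algebra_simps)
  qed
  have gcont: "continuous_on {0..t} g"
    using gder by (meson continuous_at_imp_continuous_on has_derivative_continuous)
  obtain eta where eta: "eta \<in> {0<..<t}" and
    gb: "norm (g t - g 0) \<le> norm (t *\<^sub>R (D Fu (z + of_real xi * u + of_real eta * v) v - L))"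
    using mvt_general[OF t gcont, of "\<lambda>y dy. dy *\<^sub>R (D Fu (z + of_real xi * u + of_real y * v) v - L)"]
      gder by auto
  have "norm (D Fu (z + of_real xi * u + of_real eta * v) v - L) \<le> e"
    using G[of xi eta] xi eta by (auto simp: Fu_def)
  hence gb2: "norm (g t - g 0) \<le> t * e" using gb t
    by simp (meson less_imp_le mult_left_mono order_trans)
  have "g t - g 0 = Fu (z + of_real xi * u + of_real t * v) - Fu (z + of_real xi * u + of_real 0 * v) - t *\<^sub>R L"
    unfolding g_def by (simp add: algebra_simps)
  hence "norm (h t - h 0) \<le> t * (t * e)" using hb gb2 t
    by simp (meson less_imp_le mult_left_mono order_trans)
  moreover have "h t - h 0 = F (z + of_real t * u + of_real t * v) - F (z + of_real t * u) - F (z + of_real t * v) + F z - (t*t) *\<^sub>R L"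
    unfolding h_def by (simp add: algebra_simps)
  ultimately show ?thesis by (simp add: algebra_simps)
qed

lemma schwarz:
  fixes F :: "complex \<Rightarrow> 'a::real_inner"
  assumes U: "open U" "z \<in> U"
    and dF: "\<And>w. w \<in> U \<Longrightarrow> F differentiable (at w)"
    and d1: "\<And>w. w \<in> U \<Longrightarrow> (\<lambda>w. D F w 1) differentiable (at w)"
    and di: "\<And>w. w \<in> U \<Longrightarrow> (\<lambda>w. D F w \<i>) differentiable (at w)"
    and c1: "continuous_on U (\<lambda>w. D (\<lambda>w. D F w 1) w \<i>)"
    and ci: "continuous_on U (\<lambda>w. D (\<lambda>w. D F w \<i>) w 1)"
  shows "D (\<lambda>w. D F w 1) z \<i> = D (\<lambda>w. D F w \<i>) z 1"
proof (rule ccontr)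
  define L1 where "L1 = D (\<lambda>w. D F w 1) z \<i>"
  define L2 where "L2 = D (\<lambda>w. D F w \<i>) z 1"
  assume "\<not> ?thesis"
  hence dpos: "norm (L1 - L2) > 0" unfolding L1_def L2_def by simp
  define e where "e = norm (L1 - L2) / 4"
  have epos: "e > 0" using dpos by (simp add: e_def)
  obtain d0 where d0: "d0 > 0" "ball z d0 \<subseteq> U" using U openE by blast
  obtain d1' where d1': "d1' > 0" "\<And>w. w \<in> U \<Longrightarrow> dist w z < d1' \<Longrightarrow> dist (D (\<lambda>w. D F w 1) w \<i>) L1 < e"
    using c1 U epos unfolding continuous_on_iff L1_def by metis
  obtain d2' where d2': "d2' > 0" "\<And>w. w \<in> U \<Longrightarrow> dist w z < d2' \<Longrightarrow> dist (D (\<lambda>w. D F w \<i>) w 1) L2 < e"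
    using ci U epos unfolding continuous_on_iff L2_def by metis
  define t where "t = min d0 (min d1' d2') / 3"
  have t: "t > 0" using d0 d1' d2' by (simp add: t_def)
  have near: "dist (z + of_real x * a + of_real y * b) z < min d0 (min d1' d2')"
    if "x \<in> {0..t}" "y \<in> {0..t}" "cmod a = 1" "cmod b = 1" for x y a b
  proof -
    have "dist (z + of_real x * a + of_real y * b) z = cmod (of_real x * a + of_real y * b)"
      by (simp add: dist_norm)
    also have "\<dots> \<le> cmod (of_real x * a) + cmod (of_real y * b)" by (rule norm_triangle_ineq)
    also have "\<dots> = x + y" using that by (simp add: norm_mult)
    also have "\<dots> \<le> 2 * t" using that by auto
    also have "\<dots> < min d0 (min d1' d2')" using t unfolding t_def by linarith
    finally show ?thesis .
  qed
  have inU: "z + of_real x * a + of_real y * b \<in> U"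
    if "x \<in> {0..t}" "y \<in> {0..t}" "cmod a = 1" "cmod b = 1" for x y a b
    using near[OF that] d0 by (auto simp: dist_commute subset_iff)
  have b1: "norm (F (z + of_real t * 1 + of_real t * \<i>) - F (z + of_real t * 1) - F (z + of_real t * \<i>) + F z - (t*t) *\<^sub>R L1) \<le> e * (t * t)"
  proof (rule schwarz_bound[OF _ _ _ t])
    fix x y assume xy: "x \<in> {0..t}" "y \<in> {0..t}"
    show "F differentiable at (z + of_real x * 1 + of_real y * \<i>)" using dF inU[OF xy, of 1 \<i>] by simp
    show "(\<lambda>w. D F w 1) differentiable at (z + of_real x * 1 + of_real y * \<i>)" using d1 inU[OF xy, of 1 \<i>] by simp
    show "norm (D (\<lambda>w. D F w 1) (z + of_real x * 1 + of_real y * \<i>) \<i> - L1) \<le> e"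
      using d1'(2)[OF inU[OF xy, of 1 \<i>]] near[OF xy, of 1 \<i>] by (simp add: dist_norm less_imp_le)
  qed
  have b2: "norm (F (z + of_real t * \<i> + of_real t * 1) - F (z + of_real t * \<i>) - F (z + of_real t * 1) + F z - (t*t) *\<^sub>R L2) \<le> e * (t * t)"
  proof (rule schwarz_bound[OF _ _ _ t])
    fix x y assume xy: "x \<in> {0..t}" "y \<in> {0..t}"
    have "z + of_real x * \<i> + of_real y * 1 \<in> U" using inU[OF xy(2,1), of 1 \<i>] by (simp add: algebra_simps)
    moreover have "dist (z + of_real x * \<i> + of_real y * 1) z < min d0 (min d1' d2')"
      using near[OF xy(2,1), of 1 \<i>] by (simp add: algebra_simps)
    ultimately
    show "F differentiable at (z + of_real x * \<i> + of_real y * 1)"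
      "(\<lambda>w. D F w \<i>) differentiable at (z + of_real x * \<i> + of_real y * 1)"
      "norm (D (\<lambda>w. D F w \<i>) (z + of_real x * \<i> + of_real y * 1) 1 - L2) \<le> e"
      using dF di d2'(2) by (auto simp: dist_norm less_imp_le)
  qed
  define Del where "Del = F (z + of_real t * 1 + of_real t * \<i>) - F (z + of_real t * 1) - F (z + of_real t * \<i>) + F z"
  have "z + of_real t * \<i> + of_real t * 1 = z + of_real t * 1 + of_real t * \<i>" by (simp add: algebra_simps)
  hence b2': "norm (Del - (t*t) *\<^sub>R L2) \<le> e * (t * t)" using b2 unfolding Del_def by (simp add: algebra_simps)
  have b1': "norm (Del - (t*t) *\<^sub>R L1) \<le> e * (t * t)" using b1 unfolding Del_def by simp
  have "(t*t) * norm (L1 - L2) = norm ((t*t) *\<^sub>R (L1 - L2))" using t by simp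
  also have "(t*t) *\<^sub>R (L1 - L2) = (Del - (t*t) *\<^sub>R L2) - (Del - (t*t) *\<^sub>R L1)" by (simp add: algebra_simps)
  also have "norm \<dots> \<le> norm (Del - (t*t) *\<^sub>R L2) + norm (Del - (t*t) *\<^sub>R L1)" by (rule norm_triangle_ineq4)
  also have "\<dots> \<le> 2 * e * (t * t)" using b1' b2' by simp
  finally have "(t*t) * norm (L1 - L2) \<le> (t*t) * (2 * e)" by (simp add: algebra_simps)
  hence "norm (L1 - L2) \<le> 2 * e" using t by simp
  thus False using dpos unfolding e_def by simp
qed

lemma qmul_has_derivative:
  assumes "F differentiable (at z)" "G differentiable (at z)"
  shows "((\<lambda>w. qmul (F w) (G w)) has_derivative (\<lambda>X. qmul (D F z X) (G z) + qmul (F z) (D G z X))) (at z)"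
  using bounded_bilinear.FDERIV[OF bounded_bilinear_qmul D_works[OF assms(1)] D_works[OF assms(2)]]
  by (simp add: add.commute)

lemma qmul_diff: fixes F G :: "complex \<Rightarrow> quat" assumes "F differentiable (at z)" "G differentiable (at z)"
  shows "(\<lambda>w. qmul (F w) (G w)) differentiable (at z)"
  using qmul_has_derivative[OF assms] by (rule differentiableI)

lemma D_qmul: fixes F G :: "complex \<Rightarrow> quat" assumes "F differentiable (at z)" "G differentiable (at z)"
  shows "D (\<lambda>w. qmul (F w) (G w)) z X = qmul (D F z X) (G z) + qmul (F z) (D G z X)"
  using D_unique[OF qmul_has_derivative[OF assms]] by simp

lemma qinv_diff: "q \<noteq> 0 \<Longrightarrow> qinv differentiable (at q)"
proof -
  assume q: "q \<noteq> 0"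
  have bl: "bounded_linear (\<lambda>q::quat. (cnj (fst q), - snd q))"
    by (intro bounded_linear_Pair bounded_linear_compose[OF bounded_linear_cnj] bounded_linear_fst
        bounded_linear_minus bounded_linear_snd)
  have "inner q q \<noteq> 0" using q by simp
  hence "(inverse::real\<Rightarrow>real) differentiable (at (inner q q))"
    using DERIV_inverse[of "inner q q"] unfolding has_field_derivative_def by (blast intro: differentiableI)
  hence d1: "(\<lambda>q::quat. inverse (inner q q)) differentiable (at q)"
    using differentiable_chain_at[of "\<lambda>q::quat. inner q q" q inverse] by (simp add: o_def)
  have d2: "(\<lambda>q::quat. (cnj (fst q), - snd q)) differentiable (at q)"
    using bl bounded_linear_imp_differentiable by blast
  have "qinv = (\<lambda>q. inverse (inner q q) *\<^sub>R (cnj (fst q), - snd q))"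
    by (rule ext) (simp only: qinv_def)
  moreover have "(\<lambda>q. inverse (inner q q) *\<^sub>R (cnj (fst q), - snd q)) differentiable (at q)"
    by (rule differentiable_scaleR[OF d1 d2])
  ultimately show ?thesis by (simp only:)
qed

lemma smooth2:
  assumes "smooth_on f U"
  shows "\<And>z. z \<in> U \<Longrightarrow> f differentiable (at z)"
    and "\<And>z v. z \<in> U \<Longrightarrow> (\<lambda>w. D f w v) differentiable (at z)"
    and "\<And>v u. continuous_on U (\<lambda>w. D (\<lambda>w. D f w v) w u)"
proof -
  have "Ck_on (Suc (Suc 0)) f U" using assms unfolding smooth_on_def by blast
  thus "\<And>z. z \<in> U \<Longrightarrow> f differentiable (at z)"
    "\<And>z v. z \<in> U \<Longrightarrow> (\<lambda>w. D f w v) differentiable (at z)"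
    "\<And>v u. continuous_on U (\<lambda>w. D (\<lambda>w. D f w v) w u)" by auto
qed

lemma qmul_cancel_left: "a \<noteq> 0 \<Longrightarrow> qmul a x = qmul a y \<Longrightarrow> x = y"
proof -
  assume a: "a \<noteq> 0" and e: "qmul a x = qmul a y"
  have "qmul (qinv a) (qmul a x) = qmul (qinv a) (qmul a y)" using e by simp
  thus "x = y" by (simp add: qmul_assoc[symmetric] qinv_left[OF a] qc_one_left)
qed

locale msurf =
  fixes f R :: "complex \<Rightarrow> quat" and U :: "complex set"
  assumes U: "open U" and ci: "conformal_immersion f U" and mi: "minimal_on f U"
    and rn: "right_normal f R U"
begin

lemma sm: "smooth_on f U" using ci unfolding conformal_immersion_def by blast

lemma fd: "z \<in> U \<Longrightarrow> f differentiable (at z)" using smooth2[OF sm] by blast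
lemma fvd: "z \<in> U \<Longrightarrow> (\<lambda>w. D f w v) differentiable (at z)" using smooth2[OF sm] by blast
lemma fnz: "z \<in> U \<Longrightarrow> D f z 1 \<noteq> 0" using ci unfolding conformal_immersion_def by blast

lemma fi: "z \<in> U \<Longrightarrow> D f z \<i> = - qmul (D f z 1) (R z)"
  using rn unfolding right_normal_def by (metis mult.right_neutral)

lemma RR: assumes z: "z \<in> U" shows "qmul (R z) (R z) = - qc 1"
proof -
  have "D f z (\<i> * \<i>) = - qmul (D f z \<i>) (R z)" using rn z unfolding right_normal_def by blast
  moreover have "D f z (\<i> * \<i>) = - D f z 1"
    using D_scale[OF fd[OF z], of "-1" 1] by simp
  ultimately have "qmul (D f z 1) (qmul (R z) (R z)) = qmul (D f z 1) (- qc 1)"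
    by (simp add: fi[OF z] qmul_minus_left qmul_assoc qmul_minus_right qc_one_right)
  thus ?thesis using qmul_cancel_left fnz[OF z] by blast
qed

lemma Req: "z \<in> U \<Longrightarrow> R z = - qmul (qinv (D f z 1)) (D f z \<i>)"
proof -
  assume z: "z \<in> U"
  have "qmul (qinv (D f z 1)) (D f z \<i>) = - R z"
    by (simp add: fi[OF z] qmul_minus_right qmul_assoc[symmetric] qinv_left[OF fnz[OF z]] qc_one_left)
  thus ?thesis by simp
qed

lemma Rd: assumes z: "z \<in> U" shows "R differentiable (at z)"
proof -
  have "(\<lambda>w. qinv (D f w 1)) differentiable (at z)"
    using differentiable_chain_at[OF fvd[OF z] qinv_diff[OF fnz[OF z]]] by (simp add: o_def)
  hence "(\<lambda>w. - qmul (qinv (D f w 1)) (D f w \<i>)) differentiable (at z)"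
    using qmul_diff[OF _ fvd[OF z]] differentiable_minus by blast
  show ?thesis
  proof (rule D_local(1)[OF U z])
    show "\<And>w. w \<in> U \<Longrightarrow> R w = - qmul (qinv (D f w 1)) (D f w \<i>)" by (rule Req)
  qed fact
qed

lemma schw: "z \<in> U \<Longrightarrow> D (\<lambda>w. D f w 1) z \<i> = D (\<lambda>w. D f w \<i>) z 1"
  by (rule schwarz[OF U _ fd fvd fvd]) (use smooth2(3)[OF sm] in auto)

lemma harm: "z \<in> U \<Longrightarrow> D (\<lambda>w. D f w 1) z 1 + D (\<lambda>w. D f w \<i>) z \<i> = 0"
  using mi unfolding minimal_on_def by blast

lemma R3: assumes z: "z \<in> U" shows "D R z \<i> = qmul (D R z 1) (R z)"
proof -
  define a where "a = D f z 1"
  define A11 where "A11 = D (\<lambda>w. D f w 1) z 1"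
  define A1i where "A1i = D (\<lambda>w. D f w 1) z \<i>"
  define Ai1 where "Ai1 = D (\<lambda>w. D f w \<i>) z 1"
  define Aii where "Aii = D (\<lambda>w. D f w \<i>) z \<i>"
  have dfi: "D (\<lambda>w. D f w \<i>) z X = - (qmul (D (\<lambda>w. D f w 1) z X) (R z) + qmul (D f z 1) (D R z X))" for X
  proof -
    have eq1: "D (\<lambda>w. D f w \<i>) z = D (\<lambda>w. - qmul (D f w 1) (R w)) z"
      by (rule D_local(2)[OF U z]) (use fi qmul_diff[OF fvd[OF z] Rd[OF z]] differentiable_minus in auto)
    have eq2: "D (\<lambda>w. - qmul (D f w 1) (R w)) z X = - D (\<lambda>w. qmul (D f w 1) (R w)) z X"
      using D_unique[OF has_derivative_minus[OF D_works[OF qmul_diff[OF fvd[OF z] Rd[OF z]]]]] by simp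
    show ?thesis using eq1 eq2 D_qmul[OF fvd[OF z] Rd[OF z]] by simp
  qed
  have e1: "Ai1 = - (qmul A11 (R z) + qmul a (D R z 1))" using dfi[of 1] by (simp add: Ai1_def A11_def a_def)
  have e2: "Aii = - (qmul A1i (R z) + qmul a (D R z \<i>))" using dfi[of \<i>] by (simp add: Aii_def A1i_def a_def)
  have h: "A11 + Aii = 0" using harm[OF z] by (simp add: A11_def Aii_def)
  have s: "A1i = Ai1" using schw[OF z] by (simp add: A1i_def Ai1_def)
  have "A11 = - Aii" using h by (simp add: eq_neg_iff_add_eq_0)
  also have "\<dots> = qmul A1i (R z) + qmul a (D R z \<i>)" by (simp add: e2)
  also have "\<dots> = - qmul (qmul A11 (R z)) (R z) - qmul (qmul a (D R z 1)) (R z) + qmul a (D R z \<i>)"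
    by (simp add: s e1 qmul_add_left qmul_diff_left qmul_minus_left)
  also have "\<dots> = A11 - qmul a (qmul (D R z 1) (R z)) + qmul a (D R z \<i>)"
    by (simp add: qmul_assoc RR[OF z] qmul_minus_right qc_one_right)
  finally have "qmul a (D R z \<i>) = qmul a (qmul (D R z 1) (R z))" by (simp add: algebra_simps)
  thus ?thesis using qmul_cancel_left fnz[OF z] unfolding a_def by blast
qed

end

context msurf begin

definition phi :: "quat \<Rightarrow> complex \<Rightarrow> complex" where
  "phi e w = complex_of_real (- inner (D f w \<i>) e) - \<i> * complex_of_real (inner (D f w 1) e)"

lemma phi_deriv: assumes z: "z \<in> U"
  shows "(phi e has_field_derivative
     (complex_of_real (- inner (D (\<lambda>w. D f w \<i>) z 1) e) - \<i> * complex_of_real (inner (D (\<lambda>w. D f w 1) z 1) e))) (at z)"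
proof -
  have d: "(phi e has_derivative (\<lambda>X. complex_of_real (- inner (D (\<lambda>w. D f w \<i>) z X) e) - \<i> * complex_of_real (inner (D (\<lambda>w. D f w 1) z X) e))) (at z)"
    unfolding phi_def[abs_def]
    by (rule derivative_eq_intros D_works fvd z refl)+
  define Ai1 where "Ai1 = D (\<lambda>w. D f w \<i>) z 1"
  define A11 where "A11 = D (\<lambda>w. D f w 1) z 1"
  have l1: "D (\<lambda>w. D f w \<i>) z X = Re X *\<^sub>R Ai1 - Im X *\<^sub>R A11" for X
    using D_lin[OF fvd[OF z], of \<i> X] harm[OF z] unfolding Ai1_def A11_def
    by (simp add: eq_neg_iff_add_eq_0[symmetric])
  have l2: "D (\<lambda>w. D f w 1) z X = Re X *\<^sub>R A11 + Im X *\<^sub>R Ai1" for X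
    using D_lin[OF fvd[OF z], of 1 X] schw[OF z] unfolding Ai1_def A11_def by simp
  have "(\<lambda>X. complex_of_real (- inner (D (\<lambda>w. D f w \<i>) z X) e) - \<i> * complex_of_real (inner (D (\<lambda>w. D f w 1) z X) e))
     = (\<lambda>X. (complex_of_real (- inner Ai1 e) - \<i> * complex_of_real (inner A11 e)) * X)"
    by (rule ext) (simp add: l1 l2 inner_diff_left inner_add_left complex_eq_iff algebra_simps)
  thus ?thesis using d unfolding has_field_derivative_def Ai1_def A11_def by simp
qed

lemma phi_holo: "phi e holomorphic_on U"
  unfolding holomorphic_on_def field_differentiable_def
  using phi_deriv has_field_derivative_at_within by blast

lemma conj_exists:
  assumes sc: "simply_connected U"
  shows "\<exists>fs. conjugate_surface f fs U"
proof -
  have "\<forall>e. \<exists>h. \<forall>z\<in>U. (h has_field_derivative phi e z) (at z)"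
    using simply_connected_eq_global_primitive[OF U] sc phi_holo by blast
  from choice[OF this] obtain H where H0: "\<forall>e. \<forall>z\<in>U. (H e has_field_derivative phi e z) (at z)"
    by blast
  have H: "\<And>e z. z \<in> U \<Longrightarrow> (H e has_field_derivative phi e z) (at z)" using H0 by blast
  define fs where "fs w = (\<Sum>e\<in>Basis. Re (H e w) *\<^sub>R e)" for w
  have fsd: "(fs has_derivative (\<lambda>X. - D f z (\<i> * X))) (at z)" if z: "z \<in> U" for z
  proof -
    have "(fs has_derivative (\<lambda>X. \<Sum>e\<in>Basis. Re (X * phi e z) *\<^sub>R e)) (at z)"
      unfolding fs_def[abs_def]
    proof (rule has_derivative_sum)
      fix e :: quat assume "e \<in> Basis"
      have "(H e has_derivative (\<lambda>X. X * phi e z)) (at z)"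
      proof -
        have "(\<lambda>X. X * phi e z) = (*) (phi e z)" by (rule ext) (simp add: mult.commute)
        thus ?thesis using H[OF z, of e] unfolding has_field_derivative_def by simp
      qed
      then show "((\<lambda>w. Re (H e w) *\<^sub>R e) has_derivative (\<lambda>X. Re (X * phi e z) *\<^sub>R e)) (at z)"
        by (intro derivative_eq_intros bounded_linear.has_derivative[OF bounded_linear_Re]) auto
    qed
    moreover have "(\<Sum>e\<in>Basis. Re (X * phi e z) *\<^sub>R e) = - D f z (\<i> * X)" for X
    proof -
      have "Re (X * phi e z) = inner (- D f z (\<i> * X)) e" for e
      proof -
        have dl: "D f z (\<i> * X) = Re X *\<^sub>R D f z \<i> - Im X *\<^sub>R D f z 1"
          using D_lin[OF fd[OF z], of "\<i> * X"] by simp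
        show ?thesis by (simp only: dl) (simp add: phi_def inner_diff_left algebra_simps)
      qed
      hence "(\<Sum>e\<in>Basis. Re (X * phi e z) *\<^sub>R e) = (\<Sum>e\<in>Basis. inner (- D f z (\<i> * X)) e *\<^sub>R e)"
        by (simp only:)
      thus ?thesis by (simp only: euclidean_representation)
    qed
    ultimately show ?thesis by simp
  qed
  have "conjugate_surface f fs U"
    unfolding conjugate_surface_def
  proof (intro conjI ballI allI)
    fix z assume z: "z \<in> U"
    show "fs differentiable (at z)" using fsd[OF z] by (rule differentiableI)
    fix X show "D fs z X = - D f z (\<i> * X)" using D_unique[OF fsd[OF z]] by simp
  qed
  thus ?thesis by blast
qed

end

lemma Apart_lin:
  fixes R :: "complex \<Rightarrow> quat"
  assumes Rd: "R differentiable (at z)"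
  shows "Apart f R z lam X v = Re X *\<^sub>R Apart f R z lam 1 v + Im X *\<^sub>R Apart f R z lam \<i> v"
proof -
  define P where "P = D R z 1"
  define Q where "Q = D R z \<i>"
  have l: "\<And>Y. D R z Y = Re Y *\<^sub>R P + Im Y *\<^sub>R Q" using D_lin[OF Rd] unfolding P_def Q_def by blast
  show ?thesis
    unfolding Apart_def A10_def A01_def hopfA_def starA_def rmul2_def
    by (simp only: l) (simp add: qmul_add_left qmul_add_right qmul_diff_left qmul_diff_right qmul_minus_left qmul_minus_right
      qmul_scaleR_left qmul_scaleR_right algebra_simps)
qed

lemma dS_lin:
  fixes R :: "complex \<Rightarrow> quat"
  assumes Rd: "R differentiable (at z)" and pd: "\<phi> differentiable (at z)"
  shows "dS f R lam \<phi> z X = Re X *\<^sub>R dS f R lam \<phi> z 1 + Im X *\<^sub>R dS f R lam \<phi> z \<i>"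
  unfolding dS_Apart using D_lin[OF pd, of X] Apart_lin[OF Rd, of f lam X "\<phi> z"]
  by (simp add: algebra_simps)

lemma qmul_const_right_hd:
  fixes F :: "complex \<Rightarrow> quat"
  assumes "F differentiable (at z)"
  shows "((\<lambda>w. qmul (F w) m) has_derivative (\<lambda>X. qmul (D F z X) m)) (at z)"
  using bounded_bilinear.FDERIV[OF bounded_bilinear_qmul D_works[OF assms] has_derivative_const[of m]]
  by (simp add: qmul_zero_right)

lemma D_const: "D (\<lambda>w. c) z = (\<lambda>X. 0)"
  using D_unique[OF has_derivative_const] by blast

context msurf begin

lemma DRm1: "z \<in> U \<Longrightarrow> D R z (-1) = - D R z 1"
  using D_scale[OF Rd, of z "-1" 1] by simp
lemma DRmi: "z \<in> U \<Longrightarrow> D R z (-\<i>) = - qmul (D R z 1) (R z)"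
  using D_scale[OF Rd, of z "-1" \<i>] R3 by simp

lemma fsD: "conjugate_surface f fs U \<Longrightarrow> z \<in> U \<Longrightarrow> D fs z X = qmul (D f z X) (R z)"
  using rn unfolding conjugate_surface_def right_normal_def by simp

lemma fs_d: "conjugate_surface f fs U \<Longrightarrow> z \<in> U \<Longrightarrow> fs differentiable (at z)"
  unfolding conjugate_surface_def by blast

lemma back_const:
  assumes z: "z \<in> U" and phi: "\<And>w. w \<in> U \<Longrightarrow> \<phi> w = (n, 0)"
  shows "\<phi> differentiable (at z)" "dS f R lam \<phi> z X = 0"
proof -
  have e: "\<And>w. w \<in> U \<Longrightarrow> \<phi> w = (\<lambda>_. (n, 0::quat)) w" using phi by simp
  show "\<phi> differentiable (at z)" using D_local(1)[OF U z e] by simp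
  have "D \<phi> z = (\<lambda>X. 0)" using D_local(2)[OF U z e] D_const by simp
  thus "dS f R lam \<phi> z X = 0" unfolding dS_Apart using Apart_zero phi[OF z] by simp
qed

lemma back_formula:
  assumes z: "z \<in> U" and lam: "lam \<noteq> 0" "lam \<noteq> 1" and cs: "conjugate_surface f fs U"
    and phi: "\<forall>w\<in>U. \<phi> w =
           (let c = qc (\<i> * (1 + lam) / (1 - lam));
                \<alpha> = - qmul (fs w) m - qmul (qmul (f w) m) c;
                \<beta> = qmul (R w) m + qmul m c
            in (\<alpha> + qmul (f w) \<beta>, \<beta>))"
  shows "\<phi> differentiable (at z)" "dS f R lam \<phi> z X = 0"
proof -
  define c0 where "c0 = \<i> * (1 + lam) / (1 - lam)"
  define \<beta> where "\<beta> w = qmul (R w) m + qmul m (qc c0)" for w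
  define p where "p w = - qmul (fs w) m - qmul (qmul (f w) m) (qc c0) + qmul (f w) (\<beta> w)" for w
  have e: "\<And>w. w \<in> U \<Longrightarrow> \<phi> w = (\<lambda>w. (p w, \<beta> w)) w"
    using phi unfolding p_def \<beta>_def c0_def Let_def by simp
  have hd: "\<And>F G F' G'. (F has_derivative F') (at z) \<Longrightarrow> (G has_derivative G') (at z) \<Longrightarrow>
     ((\<lambda>w. qmul (F w) (G w)) has_derivative (\<lambda>X. qmul (F' X) (G z) + qmul (F z) (G' X))) (at z)"
    using bounded_bilinear.FDERIV[OF bounded_bilinear_qmul] by (simp add: add.commute)
  have hf: "(f has_derivative D f z) (at z)" by (rule D_works[OF fd[OF z]])
  have hR: "(R has_derivative D R z) (at z)" by (rule D_works[OF Rd[OF z]])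
  have hfs: "(fs has_derivative D fs z) (at z)" by (rule D_works[OF fs_d[OF cs z]])
  have hc: "((\<lambda>w. c) has_derivative (\<lambda>X. 0)) (at z)" for c :: quat by (rule has_derivative_const)
  have hb: "(\<beta> has_derivative (\<lambda>X. qmul (D R z X) m)) (at z)"
    unfolding \<beta>_def
    by (rule has_derivative_eq_rhs[OF has_derivative_add[OF hd[OF hR hc] hc]]) (simp add: qmul_zero_right)
  have hp: "(p has_derivative (\<lambda>X. qmul (f z) (qmul (D R z X) m))) (at z)"
    unfolding p_def
    apply (rule has_derivative_eq_rhs[OF has_derivative_add[OF has_derivative_diff[OF has_derivative_minus[OF hd[OF hfs hc]]
       hd[OF hd[OF hf hc] hc]] hd[OF hf hb]]])
    apply (rule ext)
    apply (simp add: qmul_zero_right fsD[OF cs z] \<beta>_def qmul_add_right qmul_assoc)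
    done
  have hphi: "((\<lambda>w. (p w, \<beta> w)) has_derivative (\<lambda>X. (qmul (f z) (qmul (D R z X) m), qmul (D R z X) m))) (at z)"
    by (rule has_derivative_Pair[OF hp hb])
  have gd: "(\<lambda>w. (p w, \<beta> w)) differentiable (at z)" using hphi by (rule differentiableI)
  have e': "\<And>w. w \<in> U \<Longrightarrow> \<phi> w = (p w, \<beta> w)" using e by simp
  show pd: "\<phi> differentiable (at z)" by (rule D_local(1)[OF U z e' gd])
  have Dphi: "D \<phi> z X = (qmul (f z) (qmul (D R z X) m), qmul (D R z X) m)" for X
    using D_local(2)[OF U z e' gd] D_unique[OF hphi] by simp
  have sv: "snd (\<phi> z) = Ecomb (R z) m 1 c0"
    using e[OF z] unfolding \<beta>_def Ecomb_def by (simp add: qc_one_right)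
  have A1: "snd (Apart f R z lam 1 (\<phi> z)) = - qmul (D R z 1) m"
    by (rule Apart_1[OF RR[OF z] lam c0_def R3[OF z] DRm1[OF z] sv])
  have Ai: "snd (Apart f R z lam \<i> (\<phi> z)) = - qmul (qmul (D R z 1) (R z)) m"
    by (rule Apart_i[OF RR[OF z] lam c0_def DRmi[OF z] DRm1[OF z] sv])
  have A1': "Apart f R z lam 1 (\<phi> z) = (qmul (f z) (- qmul (D R z 1) m), - qmul (D R z 1) m)"
    by (rule prod_eqI) (simp_all add: A1 Apart_fst[of f R z lam 1 "\<phi> z"])
  have Ai': "Apart f R z lam \<i> (\<phi> z) = (qmul (f z) (- qmul (D R z \<i>) m), - qmul (D R z \<i>) m)"
    by (rule prod_eqI) (simp_all add: Ai R3[OF z] Apart_fst[of f R z lam \<i> "\<phi> z"])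
  have dS1: "dS f R lam \<phi> z 1 = 0"
    unfolding dS_Apart Dphi A1' by (simp add: qmul_minus_right zero_prod_def)
  have dSi: "dS f R lam \<phi> z \<i> = 0"
    unfolding dS_Apart Dphi Ai' by (simp add: qmul_minus_right zero_prod_def)
  show "dS f R lam \<phi> z X = 0" using dS_lin[OF Rd[OF z] pd, of f lam X] dS1 dSi by simp
qed

lemma c0k: assumes lam: "lam \<noteq> 0" "lam \<noteq> 1"
  shows "(1 + (\<i> * (1 + lam) / (1 - lam)) * (\<i> * (1 + lam) / (1 - lam))) * inverse (1 + (\<i> * (1 + lam) / (1 - lam)) * (\<i> * (1 + lam) / (1 - lam))) = 1"
proof -
  have l1: "1 - lam \<noteq> 0" using lam by simp
  define c where "c = \<i> * (1 + lam) / (1 - lam)"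
  have "1 + c * c \<noteq> 0"
  proof
    assume h: "1 + c * c = 0"
    have "(c - \<i>) * (c + \<i>) = 1 + c * c" by (simp add: algebra_simps)
    hence "c = \<i> \<or> c = - \<i>" using h by (simp add: eq_neg_iff_add_eq_0)
    thus False
    proof
      assume "c = \<i>"
      hence "1 + lam = 1 - lam" using l1 unfolding c_def by (simp add: field_simps)
      thus False using lam by simp
    next
      assume "c = - \<i>"
      hence "1 + lam = - (1 - lam)" using l1 unfolding c_def by (simp add: field_simps)
      thus False by simp
    qed
  qed
  thus ?thesis unfolding c_def by simp
qed

lemma forward:
  assumes sc: "simply_connected U" and lam: "lam \<noteq> 0" "lam \<noteq> 1"
    and par: "dS_parallel f R lam \<phi> U"
  shows "(\<exists>n. \<forall>z\<in>U. \<phi> z = (n, 0)) \<or>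
     (\<exists>m fs. m \<noteq> 0 \<and> conjugate_surface f fs U \<and>
        (\<forall>z\<in>U. \<phi> z =
           (let c = qc (\<i> * (1 + lam) / (1 - lam));
                \<alpha> = - qmul (fs z) m - qmul (qmul (f z) m) c;
                \<beta> = qmul (R z) m + qmul m c
            in (\<alpha> + qmul (f z) \<beta>, \<beta>))))"
proof (cases "U = {}")
  case True thus ?thesis by blast
next
  case False
  then obtain z0 where z0: "z0 \<in> U" by blast
  have conn: "connected U" using sc simply_connected_imp_connected by blast
  define c0 where "c0 = \<i> * (1 + lam) / (1 - lam)"
  define k where "k = inverse (1 + c0 * c0)"
  have k: "(1 + c0 * c0) * k = 1" unfolding k_def c0_def by (rule c0k[OF lam])
  define p where "p w = fst (\<phi> w)" for w
  define q where "q w = snd (\<phi> w)" for w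
  have phd: "\<And>z. z \<in> U \<Longrightarrow> \<phi> differentiable (at z)" using par unfolding dS_parallel_def by blast
  have dS0: "\<And>z X. z \<in> U \<Longrightarrow> D \<phi> z X + Apart f R z lam X (\<phi> z) = 0"
    using par unfolding dS_parallel_def dS_Apart by blast
  have hq: "(q has_derivative (\<lambda>X. snd (D \<phi> z X))) (at z)" if "z \<in> U" for z
    unfolding q_def by (rule has_derivative_snd[OF D_works[OF phd[OF that]]])
  have hp: "(p has_derivative (\<lambda>X. fst (D \<phi> z X))) (at z)" if "z \<in> U" for z
    unfolding p_def by (rule has_derivative_fst[OF D_works[OF phd[OF that]]])
  have qd: "\<And>z. z \<in> U \<Longrightarrow> q differentiable (at z)" using hq differentiableI by blast
  have Dq: "\<And>z X. z \<in> U \<Longrightarrow> D q z X = - snd (Apart f R z lam X (\<phi> z))"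
  proof -
    fix z X assume z: "z \<in> U"
    have "snd (D \<phi> z X + Apart f R z lam X (\<phi> z)) = 0" using dS0[OF z] by simp
    thus "D q z X = - snd (Apart f R z lam X (\<phi> z))" using D_unique[OF hq[OF z]] by (simp add: eq_neg_iff_add_eq_0)
  qed
  have Dp: "\<And>z X. z \<in> U \<Longrightarrow> D p z X = qmul (f z) (D q z X)"
  proof -
    fix z X assume z: "z \<in> U"
    have "fst (D \<phi> z X + Apart f R z lam X (\<phi> z)) = 0" using dS0[OF z] by simp
    hence "fst (D \<phi> z X) = - fst (Apart f R z lam X (\<phi> z))" by (simp add: eq_neg_iff_add_eq_0)
    also have "\<dots> = qmul (f z) (- snd (Apart f R z lam X (\<phi> z)))"
      using Apart_fst[of f R z lam X "\<phi> z"] by (simp add: qmul_minus_right)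
    finally show "D p z X = qmul (f z) (D q z X)" using D_unique[OF hp[OF z]] Dq[OF z] by simp
  qed
  define m where "m w = mform (R w) c0 k (q w)" for w
  have md: "m differentiable (at z)" if z: "z \<in> U" for z
    unfolding m_def mform_def
    by (intro differentiable_minus differentiable_diff qmul_diff Rd z qd differentiable_const)
  have qm: "\<And>w. w \<in> U \<Longrightarrow> q w = qmul (R w) (m w) + qmul (m w) (qc c0)"
    unfolding m_def using mform_right[OF RR k] by simp
  have DqX: "D q z X = qmul (D R z X) (m z) + qmul (R z) (D m z X) + qmul (D m z X) (qc c0)" if z: "z \<in> U" for z X
  proof -
    have gd: "(\<lambda>w. qmul (R w) (m w) + qmul (m w) (qc c0)) differentiable (at z)"
      by (intro differentiable_add qmul_diff Rd z md differentiable_const)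
    have eq1: "D q z = D (\<lambda>w. qmul (R w) (m w) + qmul (m w) (qc c0)) z" by (rule D_local(2)[OF U z qm gd])
    have eq2: "D (\<lambda>w. qmul (R w) (m w) + qmul (m w) (qc c0)) z X = D (\<lambda>w. qmul (R w) (m w)) z X + D (\<lambda>w. qmul (m w) (qc c0)) z X"
      using D_unique[OF has_derivative_add[OF D_works[OF qmul_diff[OF Rd[OF z] md[OF z]]] D_works[OF qmul_diff[OF md[OF z] differentiable_const]]]]
      by simp
    show ?thesis using eq1 eq2 D_qmul[OF Rd[OF z] md[OF z]] D_qmul[OF md[OF z] differentiable_const]
      by (simp add: qmul_zero_right D_const[of "qc c0" z])
  qed
  have sv: "\<And>z. z \<in> U \<Longrightarrow> snd (\<phi> z) = Ecomb (R z) (m z) 1 c0"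
    using qm unfolding q_def Ecomb_def by (simp add: qc_one_right)
  have mform0: "mform r c0 k 0 = 0" for r by (simp add: mform_def qmul_zero_right qmul_zero_left)
  have Dm0: "D m z X = 0" if z: "z \<in> U" for z X
  proof -
    have "D q z 1 = qmul (D R z 1) (m z)"
      using Dq[OF z, of 1] Apart_1[OF RR[OF z] lam c0_def R3[OF z] DRm1[OF z] sv[OF z]] by simp
    hence "qmul (R z) (D m z 1) + qmul (D m z 1) (qc c0) = 0" using DqX[OF z, of 1] by simp
    hence a: "D m z 1 = 0" using mform_left[OF RR[OF z] k, of "D m z 1"] mform0 by simp
    have "D q z \<i> = qmul (D R z \<i>) (m z)"
      using Dq[OF z, of \<i>] Apart_i[OF RR[OF z] lam c0_def DRmi[OF z] DRm1[OF z] sv[OF z]] R3[OF z] by simp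
    hence "qmul (R z) (D m z \<i>) + qmul (D m z \<i>) (qc c0) = 0" using DqX[OF z, of \<i>] by simp
    hence b: "D m z \<i> = 0" using mform_left[OF RR[OF z] k, of "D m z \<i>"] mform0 by simp
    show ?thesis using D_lin[OF md[OF z], of X] a b by simp
  qed
  have mc: "\<And>w. w \<in> U \<Longrightarrow> m w = m z0"
  proof -
    fix w assume w: "w \<in> U"
    show "m w = m z0"
    proof (rule has_derivative_zero_unique_connected[OF U conn _ w z0])
      fix x assume x: "x \<in> U"
      have "D m x = (\<lambda>X. 0)" by (rule ext) (rule Dm0[OF x])
      thus "(m has_derivative (\<lambda>x. 0)) (at x)" using D_works[OF md[OF x]] by simp
    qed
  qed
  define m0 where "m0 = m z0"
  have qU: "\<And>w. w \<in> U \<Longrightarrow> q w = qmul (R w) m0 + qmul m0 (qc c0)" using qm mc unfolding m0_def by simp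
  show ?thesis
  proof (cases "m0 = 0")
    case True
    have q0: "\<And>w. w \<in> U \<Longrightarrow> q w = (\<lambda>_. 0) w" using qU True by (simp add: qmul_zero_right qmul_zero_left)
    have "p w = p z0" if w: "w \<in> U" for w
    proof (rule has_derivative_zero_unique_connected[OF U conn _ w z0])
      fix x assume x: "x \<in> U"
      have "D q x = (\<lambda>X. 0)" using D_local(2)[OF U x q0 differentiable_const] D_const by simp
      hence "D p x = (\<lambda>X. 0)" using Dp[OF x] by (intro ext) (simp add: qmul_zero_right)
      thus "(p has_derivative (\<lambda>x. 0)) (at x)" using hp[OF x] D_unique[OF hp[OF x]] by simp
    qed
    hence "\<forall>z\<in>U. \<phi> z = (p z0, 0)" using q0 unfolding p_def q_def by (metis prod.collapse)
    thus ?thesis by blast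
  next
    case False
    obtain F where cF: "conjugate_surface f F U" using conj_exists[OF sc] by blast
    define G where "G w = p w - (- qmul (F w) m0 - qmul (qmul (f w) m0) (qc c0) + qmul (f w) (q w))" for w
    have hG: "(G has_derivative (\<lambda>X. 0)) (at z)" if z: "z \<in> U" for z
    proof -
      have hd: "\<And>F G F' G'. (F has_derivative F') (at z) \<Longrightarrow> (G has_derivative G') (at z) \<Longrightarrow>
         ((\<lambda>w. qmul (F w) (G w)) has_derivative (\<lambda>X. qmul (F' X) (G z) + qmul (F z) (G' X))) (at z)"
        using bounded_bilinear.FDERIV[OF bounded_bilinear_qmul] by (simp add: add.commute)
      have hf: "(f has_derivative D f z) (at z)" by (rule D_works[OF fd[OF z]])
      have hF: "(F has_derivative D F z) (at z)" by (rule D_works[OF fs_d[OF cF z]])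
      have hq': "(q has_derivative D q z) (at z)" by (rule D_works[OF qd[OF z]])
      have hp': "(p has_derivative D p z) (at z)" using hp[OF z] D_unique[OF hp[OF z]] by simp
      have hc: "((\<lambda>w. c) has_derivative (\<lambda>X. 0)) (at z)" for c :: quat by (rule has_derivative_const)
      show ?thesis unfolding G_def
        apply (rule has_derivative_eq_rhs[OF has_derivative_diff[OF hp' has_derivative_add[OF has_derivative_diff[OF has_derivative_minus[OF hd[OF hF hc]]
           hd[OF hd[OF hf hc] hc]] hd[OF hf hq']]]])
        apply (rule ext)
        apply (simp add: qmul_zero_right fsD[OF cF z] Dp[OF z] qU[OF z] qmul_add_right qmul_assoc)
        done
    qed
    have Gc: "\<And>w. w \<in> U \<Longrightarrow> G w = G z0"
      using has_derivative_zero_unique_connected[OF U conn hG] z0 by blast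
    define K where "K = G z0"
    define fs where "fs w = F w - qmul K (qinv m0)" for w
    have hfs: "(fs has_derivative D F z) (at z)" if z: "z \<in> U" for z
      unfolding fs_def using has_derivative_diff[OF D_works[OF fs_d[OF cF z]] has_derivative_const] by simp
    have cfs: "conjugate_surface f fs U"
      unfolding conjugate_surface_def
    proof (intro conjI ballI allI)
      fix z assume z: "z \<in> U"
      show "fs differentiable (at z)" using hfs[OF z] by (rule differentiableI)
      fix X show "D fs z X = - D f z (\<i> * X)"
        using D_unique[OF hfs[OF z]] cF z unfolding conjugate_surface_def by simp
    qed
    have "\<forall>z\<in>U. \<phi> z =
           (let c = qc (\<i> * (1 + lam) / (1 - lam));
                \<alpha> = - qmul (fs z) m0 - qmul (qmul (f z) m0) c;
                \<beta> = qmul (R z) m0 + qmul m0 c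
            in (\<alpha> + qmul (f z) \<beta>, \<beta>))"
    proof
      fix z assume z: "z \<in> U"
      have pz: "p z = K + (- qmul (F z) m0 - qmul (qmul (f z) m0) (qc c0) + qmul (f z) (q z))"
        using Gc[OF z] unfolding K_def G_def by (simp add: algebra_simps)
      have h1: "qmul (fs z) m0 = qmul (F z) m0 - K"
        unfolding fs_def by (simp add: qmul_diff_left qmul_assoc qinv_left[OF False] qc_one_right)
      have "p z = - qmul (fs z) m0 - qmul (qmul (f z) m0) (qc c0) + qmul (f z) (q z)"
        unfolding h1 pz by (simp add: algebra_simps)
      moreover have "\<phi> z = (p z, q z)" unfolding p_def q_def by simp
      ultimately show "\<phi> z = (let c = qc (\<i> * (1 + lam) / (1 - lam));
                \<alpha> = - qmul (fs z) m0 - qmul (qmul (f z) m0) c;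
                \<beta> = qmul (R z) m0 + qmul m0 c
            in (\<alpha> + qmul (f z) \<beta>, \<beta>))"
        using qU[OF z] unfolding Let_def c0_def by simp
    qed
    thus ?thesis using False cfs by blast
  qed
qed

end

theorem mainTheorem5:
  fixes U :: "complex set" and f R :: "complex \<Rightarrow> quat" and \<mu> :: complex
    and \<phi> :: "complex \<Rightarrow> quat \<times> quat"
  assumes "open U" and "connected U" and "simply_connected U"
    and "conformal_immersion f U" and "minimal_on f U" and "right_normal f R U"
    and "\<mu> \<noteq> 0" and "\<mu> \<noteq> 1"
  shows "dS_parallel f R \<mu> \<phi> U \<longleftrightarrow>
    ((\<exists>n. \<forall>z\<in>U. \<phi> z = (n, 0)) \<or>
     (\<exists>m fs. m \<noteq> 0 \<and> conjugate_surface f fs U \<and>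
        (\<forall>z\<in>U. \<phi> z =
           (let c = qc (\<i> * (1 + \<mu>) / (1 - \<mu>));
                \<alpha> = - qmul (fs z) m - qmul (qmul (f z) m) c;
                \<beta> = qmul (R z) m + qmul m c
            in (\<alpha> + qmul (f z) \<beta>, \<beta>)))))"
proof -
  interpret msurf f R U using assms(1,4,5,6) by unfold_locales
  show ?thesis
  proof
    assume par: "dS_parallel f R \<mu> \<phi> U"
    show "(\<exists>n. \<forall>z\<in>U. \<phi> z = (n, 0)) \<or>
     (\<exists>m fs. m \<noteq> 0 \<and> conjugate_surface f fs U \<and>
        (\<forall>z\<in>U. \<phi> z =
           (let c = qc (\<i> * (1 + \<mu>) / (1 - \<mu>));
                \<alpha> = - qmul (fs z) m - qmul (qmul (f z) m) c;
                \<beta> = qmul (R z) m + qmul m c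
            in (\<alpha> + qmul (f z) \<beta>, \<beta>))))"
      by (rule forward[OF assms(3,7,8) par])
  next
    assume h: "(\<exists>n. \<forall>z\<in>U. \<phi> z = (n, 0)) \<or>
     (\<exists>m fs. m \<noteq> 0 \<and> conjugate_surface f fs U \<and>
        (\<forall>z\<in>U. \<phi> z =
           (let c = qc (\<i> * (1 + \<mu>) / (1 - \<mu>));
                \<alpha> = - qmul (fs z) m - qmul (qmul (f z) m) c;
                \<beta> = qmul (R z) m + qmul m c
            in (\<alpha> + qmul (f z) \<beta>, \<beta>))))"
    show "dS_parallel f R \<mu> \<phi> U"
      using h
    proof
      assume "\<exists>n. \<forall>z\<in>U. \<phi> z = (n, 0)"
      then obtain n where n: "\<And>z. z \<in> U \<Longrightarrow> \<phi> z = (n, 0)" by blast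
      show ?thesis unfolding dS_parallel_def
      proof (intro conjI ballI allI)
        fix z assume z: "z \<in> U"
        show "\<phi> differentiable (at z)" by (rule back_const(1)[OF z n])
        fix X show "dS f R \<mu> \<phi> z X = 0" by (rule back_const(2)[OF z n])
      qed
    next
      assume "\<exists>m fs. m \<noteq> 0 \<and> conjugate_surface f fs U \<and>
        (\<forall>z\<in>U. \<phi> z =
           (let c = qc (\<i> * (1 + \<mu>) / (1 - \<mu>));
                \<alpha> = - qmul (fs z) m - qmul (qmul (f z) m) c;
                \<beta> = qmul (R z) m + qmul m c
            in (\<alpha> + qmul (f z) \<beta>, \<beta>)))"
      then obtain m fs where cs: "conjugate_surface f fs U" and ph: "\<forall>z\<in>U. \<phi> z =
           (let c = qc (\<i> * (1 + \<mu>) / (1 - \<mu>));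
                \<alpha> = - qmul (fs z) m - qmul (qmul (f z) m) c;
                \<beta> = qmul (R z) m + qmul m c
            in (\<alpha> + qmul (f z) \<beta>, \<beta>))" by blast
      show ?thesis unfolding dS_parallel_def
      proof (intro conjI ballI allI)
        fix z assume z: "z \<in> U"
        show "\<phi> differentiable (at z)" by (rule back_formula(1)[OF z assms(7,8) cs ph])
        fix X show "dS f R \<mu> \<phi> z X = 0" by (rule back_formula(2)[OF z assms(7,8) cs ph])
      qed
    qed
  qed
qed

end
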